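(* Let $n,s$ be positive integers with $2s\le n$ and let $L=[s]=\{1,\ldots,s\}$. Let $\mathcal{F}\subseteq2^{[n]}$ be $L$-close Sperner (respectively, $L$-differencing Sperner). Then there exists $\mathcal{F}'\subseteq2^{[n]}$ with $|\mathcal{F}'|=|\mathcal{F}|$, such that $s\le|A|\le n-s$ for every $A\in\mathcal{F}'$, and $\mathcal{F}'$ is $L$-close Sperner (respectively, $L$-differencing Sperner).
   Context: $\mathcal{F}\subseteq2^{[n]}$ is $L$-differencing Sperner if $|A\setminus B|\in L$ for all distinct $A,B\in\mathcal{F}$, and $L$-close Sperner if $\min\{|A\setminus B|,|B\setminus A|\}\in L$ for all distinct $A,B\in\mathcal{F}$. *)

theory Defs
  imports Main
begin

definition L_differencing_sperner :: "nat set \<Rightarrow> 'a set set \<Rightarrow> bool" where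
  "L_differencing_sperner L F \<longleftrightarrow> (\<forall>A\<in>F. \<forall>B\<in>F. A \<noteq> B \<longrightarrow> card (A - B) \<in> L)"

definition L_close_sperner :: "nat set \<Rightarrow> 'a set set \<Rightarrow> bool" where
  "L_close_sperner L F \<longleftrightarrow> (\<forall>A\<in>F. \<forall>B\<in>F. A \<noteq> B \<longrightarrow> min (card (A - B)) (card (B - A)) \<in> L)"

end

theory Submission
  imports Defs
begin

lemma shadow:
  assumes G: "G \<subseteq> Pow {1..n}" and Gk: "\<forall>A\<in>G. card A = k" and nk: "2*k+1 \<le> (n::nat)"
  shows "card G \<le> card {C. C \<subseteq> {1..n} \<and> card C = Suc k \<and> (\<exists>A\<in>G. A \<subseteq> C)}"
proof -
  define S where "S = {C. C \<subseteq> {1..n} \<and> card C = Suc k \<and> (\<exists>A\<in>G. A \<subseteq> C)}"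
  define f where "f A = (\<lambda>x. insert x A) ` ({1..n} - A)" for A :: "nat set"
  define P where "P = Sigma G f"
  have finG: "finite G" using G by (meson finite_Pow_iff finite_atLeastAtMost finite_subset)
  have finS: "finite S" unfolding S_def by (rule finite_subset[of _ "Pow {1..n}"]) auto
  have cardf: "card (f A) = n - k" if "A \<in> G" for A
  proof -
    have AS: "A \<subseteq> {1..n}" using G that by auto
    have fA: "finite A" using AS finite_subset by blast
    have "inj_on (\<lambda>x. insert x A) ({1..n} - A)"
      by (auto simp: inj_on_def)
    then have "card (f A) = card ({1..n} - A)" unfolding f_def by (rule card_image)
    also have "\<dots> = n - k" using card_Diff_subset[OF fA AS] Gk that by simp
    finally show ?thesis .
  qed
  have finf: "finite (f A)" for A unfolding f_def by simp
  have cP: "card P = card G * (n - k)"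
  proof -
    have "card P = (\<Sum>A\<in>G. card (f A))" unfolding P_def using card_SigmaI[OF finG, of f] finf by simp
    also have "\<dots> = (\<Sum>A\<in>G. n - k)" using cardf by (rule sum.cong[OF refl])
    finally show ?thesis by simp
  qed
  have sub: "P \<subseteq> (\<Union>C\<in>S. (\<lambda>x. (C - {x}, C)) ` C)"
  proof
    fix p assume "p \<in> P"
    then obtain A x where p: "p = (A, insert x A)" "A \<in> G" "x \<in> {1..n}" "x \<notin> A"
      unfolding P_def f_def by auto
    have AS: "A \<subseteq> {1..n}" using G p by auto
    have fA: "finite A" using AS finite_subset by blast
    have "insert x A \<in> S" unfolding S_def using p AS fA Gk by auto
    moreover have "p = (\<lambda>y. (insert x A - {y}, insert x A)) x" using p by auto
    ultimately show "p \<in> (\<Union>C\<in>S. (\<lambda>x. (C - {x}, C)) ` C)" by blast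
  qed
  have "card P \<le> card (\<Union>C\<in>S. (\<lambda>x. (C - {x}, C)) ` C)"
    by (rule card_mono[OF _ sub]) (use finS S_def finite_subset in fastforce)
  also have "\<dots> \<le> (\<Sum>C\<in>S. card ((\<lambda>x. (C - {x}, C)) ` C))" by (rule card_UN_le[OF finS])
  also have "\<dots> \<le> (\<Sum>C\<in>S. card C)" by (rule sum_mono) (rule card_image_le, use S_def card.infinite in fastforce)
  also have "\<dots> = card S * Suc k" unfolding S_def by simp
  finally have "card G * (n - k) \<le> card S * Suc k" using cP by simp
  moreover have "card G * Suc k \<le> card G * (n - k)" using nk by (intro mult_le_mono2) simp
  ultimately have "card G * Suc k \<le> card S * Suc k" by linarith
  then have "card G \<le> card S" using mult_le_cancel2 by blast
  then show ?thesis unfolding S_def .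
qed
definition ach :: "nat set set \<Rightarrow> bool" where
  "ach F \<longleftrightarrow> (\<forall>A\<in>F. \<forall>B\<in>F. A \<subseteq> B \<longrightarrow> A = B)"

lemma raise:
  assumes ns: "2*s \<le> (n::nat)"
  shows "F \<subseteq> Pow {1..n} \<Longrightarrow> ach F \<Longrightarrow> \<exists>F'. F' \<subseteq> Pow {1..n} \<and> ach F' \<and> card F' = card F \<and>
     (\<forall>X\<in>F'. s \<le> card X \<and> (\<exists>A\<in>F. A \<subseteq> X \<and> (X = A \<or> card X \<le> s)))"
proof (induction "\<Sum>A\<in>F. s - card A" arbitrary: F rule: less_induct)
  case less
  have finF: "finite F" using less.prems(1) by (meson finite_Pow_iff finite_atLeastAtMost finite_subset)
  have finA: "finite A" if "A \<in> F" for A using less.prems(1) that finite_subset by blast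
  show ?case
  proof (cases "\<exists>A\<in>F. card A < s")
    case False
    have "\<forall>X\<in>F. s \<le> card X \<and> (\<exists>A\<in>F. A \<subseteq> X \<and> (X = A \<or> card X \<le> s))"
      using False by (auto simp: not_less)
    then show ?thesis using less.prems by blast
  next
    case True
    define k where "k = Min (card ` {A\<in>F. card A < s})"
    have kin: "k \<in> card ` {A\<in>F. card A < s}" unfolding k_def
      by (rule Min_in) (use finF True in auto)
    then have ks: "k < s" by auto
    have kmin: "k \<le> card A" if "A \<in> F" for A
    proof (cases "card A < s")
      case True then show ?thesis unfolding k_def by (intro Min_le) (use finF that in auto)
    next
      case False then show ?thesis using ks by simp
    qed
    define G where "G = {A\<in>F. card A = k}"
    define S where "S = {C. C \<subseteq> {1..n} \<and> card C = Suc k \<and> (\<exists>A\<in>G. A \<subseteq> C)}"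
    have GF: "G \<subseteq> F" unfolding G_def by auto
    have Gne: "G \<noteq> {}" using kin unfolding G_def by auto
    have finG: "finite G" using finF GF finite_subset by blast
    have "card G \<le> card S" unfolding S_def
      by (rule shadow) (use less.prems(1) GF ks ns in \<open>auto simp: G_def\<close>)
    then obtain G' where G': "G' \<subseteq> S" "card G' = card G" "finite G'"
      by (rule obtain_subset_with_card_n)
    have SF: "C \<notin> F" if "C \<in> S" for C
    proof
      assume "C \<in> F"
      from that obtain A where "A \<in> G" "A \<subseteq> C" "card C = Suc k" unfolding S_def by auto
      then have "A = C" using \<open>C \<in> F\<close> less.prems(2) GF unfolding ach_def by auto
      then show False using \<open>A \<in> G\<close> \<open>card C = Suc k\<close> unfolding G_def by auto
    qed
    define F1 where "F1 = (F - G) \<union> G'"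
    have F1P: "F1 \<subseteq> Pow {1..n}" using less.prems(1) G'(1) unfolding F1_def S_def by auto
    have achF1: "ach F1" unfolding ach_def
    proof (intro ballI impI)
      fix X Y assume X: "X \<in> F1" and Y: "Y \<in> F1" and XY: "X \<subseteq> Y"
      show "X = Y"
      proof (cases "X \<in> G'")
        case XG: True
        then obtain A where A: "A \<in> G" "A \<subseteq> X" "card X = Suc k" using G'(1) unfolding S_def by auto
        show ?thesis
        proof (cases "Y \<in> G'")
          case True
          then have "card Y = Suc k" using G'(1) unfolding S_def by auto
          moreover have "finite Y" by (rule card_ge_0_finite) (use calculation in simp)
          ultimately show ?thesis using card_subset_eq[of Y X] A XY by simp
        next
          case False
          then have "Y \<in> F" "Y \<notin> G" using Y unfolding F1_def by auto
          have "A \<in> F" using A GF by auto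
          have "A \<subseteq> Y" using A(2) XY by (rule subset_trans)
          then have "A = Y" using \<open>A \<in> F\<close> \<open>Y \<in> F\<close> less.prems(2) unfolding ach_def by simp
          then show ?thesis using A(1) \<open>Y \<notin> G\<close> by simp
        qed
      next
        case XG: False
        then have XF: "X \<in> F" "X \<notin> G" using X unfolding F1_def by auto
        have "card X \<noteq> k" using XF unfolding G_def by auto
        then have ck: "card X > k" using kmin[OF XF(1)] by linarith
        show ?thesis
        proof (cases "Y \<in> G'")
          case True
          then have YS: "Y \<in> S" "card Y = Suc k" using G'(1) unfolding S_def by auto
          have "finite Y" by (rule card_ge_0_finite) (use YS in simp)
          then have "card X \<le> card Y" using XY card_mono by blast
          then have "card X = card Y" using ck YS by simp
          then have "X = Y" using card_subset_eq[of Y X] \<open>finite Y\<close> XY by simp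
          then show ?thesis .
        next
          case False
          then have "Y \<in> F" using Y unfolding F1_def by auto
          then show ?thesis using XF XY less.prems(2) unfolding ach_def by auto
        qed
      qed
    qed
    have disj: "(F - G) \<inter> G' = {}" using SF G'(1) by auto
    have cF1: "card F1 = card F"
    proof -
      have "card F1 = card (F - G) + card G'" unfolding F1_def
        using card_Un_disjoint[OF _ G'(3) disj] finF by simp
      also have "\<dots> = card F - card G + card G" using card_Diff_subset[OF finG GF] G'(2) by simp
      also have "\<dots> = card F" using card_mono[OF finF GF] by simp
      finally show ?thesis .
    qed
    have meas: "(\<Sum>A\<in>F1. s - card A) < (\<Sum>A\<in>F. s - card A)"
    proof -
      have "(\<Sum>A\<in>F1. s - card A) = (\<Sum>A\<in>F - G. s - card A) + (\<Sum>A\<in>G'. s - card A)"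
        unfolding F1_def using sum.union_disjoint[OF _ G'(3) disj] finF by simp
      also have "(\<Sum>A\<in>G'. s - card A) = (\<Sum>A\<in>G'. s - Suc k)"
        by (rule sum.cong) (use G'(1) S_def in auto)
      also have "\<dots> = card G * (s - Suc k)" using G'(2) by simp
      also have "\<dots> < card G * (s - k)" using ks Gne finG by (simp add: card_gt_0_iff)
      also have "card G * (s - k) = (\<Sum>A\<in>G. s - card A)" by (simp add: G_def)
      also have "(\<Sum>A\<in>F - G. s - card A) + (\<Sum>A\<in>G. s - card A) = (\<Sum>A\<in>F. s - card A)"
        using sum.subset_diff[OF GF finF, of "\<lambda>A. s - card A"] by simp
      finally show ?thesis by simp
    qed
    obtain F2 where F2: "F2 \<subseteq> Pow {1..n}" "ach F2" "card F2 = card F1"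
      "\<forall>X\<in>F2. s \<le> card X \<and> (\<exists>A\<in>F1. A \<subseteq> X \<and> (X = A \<or> card X \<le> s))"
      using less.hyps[OF meas F1P achF1] by blast
    have "\<forall>X\<in>F2. s \<le> card X \<and> (\<exists>A\<in>F. A \<subseteq> X \<and> (X = A \<or> card X \<le> s))"
    proof
      fix X assume "X \<in> F2"
      then obtain Y where Y: "s \<le> card X" "Y \<in> F1" "Y \<subseteq> X" "X = Y \<or> card X \<le> s" using F2(4) by blast
      show "s \<le> card X \<and> (\<exists>A\<in>F. A \<subseteq> X \<and> (X = A \<or> card X \<le> s))"
      proof (cases "Y \<in> G'")
        case True
        then obtain A where A: "A \<in> G" "A \<subseteq> Y" "card Y = Suc k" using G'(1) unfolding S_def by auto
        have "card X \<le> s" using Y(4) A(3) ks by auto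
        moreover have "A \<in> F" using A GF by auto
        moreover have "A \<subseteq> X" using A(2) Y(3) by (rule subset_trans)
        ultimately show ?thesis using Y(1) by blast
      next
        case False
        then have "Y \<in> F" using Y(2) unfolding F1_def by auto
        then show ?thesis using Y(1,3,4) by blast
      qed
    qed
    then show ?thesis using F2(1,2,3) cF1 by (intro exI[of _ F2]) simp
  qed
qed

lemma compl_card: "X \<subseteq> {1..n} \<Longrightarrow> card ({1..n} - X) = n - card (X::nat set)"
  using card_Diff_subset[of X "{1..n}"] finite_subset[of X "{1..n}"] by simp

lemma lower:
  assumes ns: "2*s \<le> (n::nat)" and FP: "F \<subseteq> Pow {1..n}" and achF: "ach F"
  shows "\<exists>F'. F' \<subseteq> Pow {1..n} \<and> ach F' \<and> card F' = card F \<and>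
     (\<forall>X\<in>F'. card X \<le> n - s \<and> (\<exists>A\<in>F. X \<subseteq> A \<and> (X = A \<or> n - s \<le> card X)))"
proof -
  define c where "c X = {1..n} - X" for X :: "nat set"
  have cc: "c (c X) = X" if "X \<subseteq> {1..n}" for X using that unfolding c_def by auto
  have cP: "c X \<subseteq> {1..n}" for X unfolding c_def by auto
  have inj: "inj_on c (Pow {1..n})" by (rule inj_on_inverseI[of _ c]) (use cc in auto)
  have anti: "c X \<subseteq> c Y \<Longrightarrow> X \<subseteq> {1..n} \<Longrightarrow> Y \<subseteq> {1..n} \<Longrightarrow> Y \<subseteq> X" for X Y unfolding c_def by auto
  define Fc where "Fc = c ` F"
  have FcP: "Fc \<subseteq> Pow {1..n}" unfolding Fc_def using cP by auto
  have achFc: "ach Fc" unfolding ach_def Fc_def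
  proof (intro ballI impI)
    fix X Y assume "X \<in> c ` F" "Y \<in> c ` F" "X \<subseteq> Y"
    then obtain A B where AB: "A \<in> F" "B \<in> F" "X = c A" "Y = c B" by auto
    have "B \<subseteq> A" using anti[of A B] AB \<open>X \<subseteq> Y\<close> FP by auto
    then have "B = A" using achF AB unfolding ach_def by simp
    then show "X = Y" using AB by simp
  qed
  have cardFc: "card Fc = card F" unfolding Fc_def
    by (rule card_image) (rule inj_on_subset[OF inj FP])
  obtain F1 where F1: "F1 \<subseteq> Pow {1..n}" "ach F1" "card F1 = card Fc"
     "\<forall>X\<in>F1. s \<le> card X \<and> (\<exists>A\<in>Fc. A \<subseteq> X \<and> (X = A \<or> card X \<le> s))"
    using raise[OF ns FcP achFc] by blast
  define F' where "F' = c ` F1"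
  have "F' \<subseteq> Pow {1..n}" unfolding F'_def using cP by auto
  moreover have "ach F'" unfolding ach_def F'_def
  proof (intro ballI impI)
    fix X Y assume "X \<in> c ` F1" "Y \<in> c ` F1" "X \<subseteq> Y"
    then obtain A B where AB: "A \<in> F1" "B \<in> F1" "X = c A" "Y = c B" by auto
    have "B \<subseteq> A" using anti[of A B] AB \<open>X \<subseteq> Y\<close> F1(1) by auto
    then have "B = A" using F1(2) AB unfolding ach_def by simp
    then show "X = Y" using AB by simp
  qed
  moreover have "card F' = card F" unfolding F'_def
    using card_image[OF inj_on_subset[OF inj F1(1)]] F1(3) cardFc by simp
  moreover have "\<forall>X\<in>F'. card X \<le> n - s \<and> (\<exists>A\<in>F. X \<subseteq> A \<and> (X = A \<or> n - s \<le> card X))"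
  proof
    fix X assume "X \<in> F'"
    then obtain Y where Y: "Y \<in> F1" "X = c Y" unfolding F'_def by auto
    have YP: "Y \<subseteq> {1..n}" using Y F1(1) by auto
    obtain A' where A': "A' \<in> Fc" "A' \<subseteq> Y" "Y = A' \<or> card Y \<le> s" "s \<le> card Y"
      using F1(4) Y(1) by blast
    obtain A where A: "A \<in> F" "A' = c A" using A'(1) unfolding Fc_def by auto
    have AP: "A \<subseteq> {1..n}" using A FP by auto
    have cX: "card X = n - card Y" using compl_card[OF YP] Y(2) c_def by simp
    have AA: "A = {1..n} - A'" using A(2) cc[OF AP] unfolding c_def by simp
    have XY: "X = {1..n} - Y" using Y(2) unfolding c_def by simp
    have "X \<subseteq> A" unfolding AA XY using A'(2) by blast
    moreover have "X = A \<or> n - s \<le> card X"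
    proof (cases "Y = A'")
      case True then show ?thesis unfolding AA XY by simp
    next
      case False then show ?thesis using A'(3) cX by (simp add: diff_le_mono2)
    qed
    moreover have "card X \<le> n - s" using cX A'(4) by simp
    ultimately show "card X \<le> n - s \<and> (\<exists>A\<in>F. X \<subseteq> A \<and> (X = A \<or> n - s \<le> card X))"
      using A(1) by blast
  qed
  ultimately show ?thesis by blast
qed

lemma middle:
  assumes ns: "2*s \<le> (n::nat)" and FP: "F \<subseteq> Pow {1..n}" and achF: "ach F"
  shows "\<exists>F'. F' \<subseteq> Pow {1..n} \<and> ach F' \<and> card F' = card F \<and>
     (\<forall>X\<in>F'. s \<le> card X \<and> card X \<le> n - s \<and>
        (\<exists>A\<in>F. (card X = s \<and> A \<subseteq> X) \<or> (card X = n - s \<and> X \<subseteq> A) \<or> X = A))"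
proof -
  obtain F1 where F1: "F1 \<subseteq> Pow {1..n}" "ach F1" "card F1 = card F"
     "\<forall>X\<in>F1. s \<le> card X \<and> (\<exists>A\<in>F. A \<subseteq> X \<and> (X = A \<or> card X \<le> s))"
    using raise[OF ns FP achF] by blast
  obtain F2 where F2: "F2 \<subseteq> Pow {1..n}" "ach F2" "card F2 = card F1"
     "\<forall>X\<in>F2. card X \<le> n - s \<and> (\<exists>A\<in>F1. X \<subseteq> A \<and> (X = A \<or> n - s \<le> card X))"
    using lower[OF ns F1(1,2)] by blast
  have "\<forall>X\<in>F2. s \<le> card X \<and> card X \<le> n - s \<and>
        (\<exists>A\<in>F. (card X = s \<and> A \<subseteq> X) \<or> (card X = n - s \<and> X \<subseteq> A) \<or> X = A)"
  proof
    fix X assume X: "X \<in> F2"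
    then obtain Y where Y: "Y \<in> F1" "X \<subseteq> Y" "X = Y \<or> n - s \<le> card X" "card X \<le> n - s"
      using F2(4) by blast
    obtain A where A: "A \<in> F" "A \<subseteq> Y" "Y = A \<or> card Y \<le> s" "s \<le> card Y"
      using F1(4) Y(1) by blast
    have finY: "finite Y" using Y(1) F1(1) finite_subset by blast
    have sX: "s \<le> card X"
    proof (cases "X = Y")
      case True then show ?thesis using A(4) by simp
    next
      case False then show ?thesis using Y(3) ns by simp
    qed
    have "(card X = s \<and> A \<subseteq> X) \<or> (card X = n - s \<and> X \<subseteq> A) \<or> X = A"
    proof (cases "X = Y")
      case True
      then show ?thesis using A(2,3,4) by auto
    next
      case XY: False
      then have cX: "card X = n - s" using Y(3,4) by simp
      show ?thesis
      proof (cases "Y = A")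
        case True then show ?thesis using cX Y(2) by simp
      next
        case False
        then have "card Y \<le> s" using A(3) by simp
        moreover have "card X \<le> card Y" using card_mono[OF finY Y(2)] .
        ultimately have "card X = card Y" using sX by simp
        then have "X = Y" using card_subset_eq[OF finY Y(2)] by simp
        then show ?thesis using XY by simp
      qed
    qed
    then show "s \<le> card X \<and> card X \<le> n - s \<and>
        (\<exists>A\<in>F. (card X = s \<and> A \<subseteq> X) \<or> (card X = n - s \<and> X \<subseteq> A) \<or> X = A)"
      using sX Y(4) A(1) by blast
  qed
  then show ?thesis using F2(1,2,3) F1(3) by (intro exI[of _ F2]) simp
qed


lemma card_diff_le_compl:
  assumes "X \<subseteq> {1..n}" "Y \<subseteq> {1..(n::nat)}"
  shows "card (Y - X) \<le> n - card X"
proof -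
  have "Y - X \<subseteq> {1..n} - X" using assms by auto
  then have "card (Y - X) \<le> card ({1..n} - X)" by (rule card_mono[rotated]) simp
  then show ?thesis using compl_card[OF assms(1)] by simp
qed

lemma diff_pos:
  assumes "finite X" "\<not> X \<subseteq> Y" shows "1 \<le> card (X - Y)"
proof -
  have "X - Y \<noteq> {}" using assms(2) by auto
  moreover have "finite (X - Y)" using assms(1) by simp
  ultimately have "0 < card (X - Y)" by (simp add: card_gt_0_iff)
  then show ?thesis by simp
qed

theorem mainTheorem10:
  fixes n s :: nat
  assumes "0 < n" and "0 < s" and "2 * s \<le> n"
  shows "(\<forall>F. F \<subseteq> Pow {1..n} \<longrightarrow> L_close_sperner {1..s} F \<longrightarrow>
            (\<exists>F'. F' \<subseteq> Pow {1..n} \<and> card F' = card F \<and>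
                  (\<forall>A\<in>F'. s \<le> card A \<and> card A \<le> n - s) \<and> L_close_sperner {1..s} F'))
       \<and> (\<forall>F. F \<subseteq> Pow {1..n} \<longrightarrow> L_differencing_sperner {1..s} F \<longrightarrow>
            (\<exists>F'. F' \<subseteq> Pow {1..n} \<and> card F' = card F \<and>
                  (\<forall>A\<in>F'. s \<le> card A \<and> card A \<le> n - s) \<and> L_differencing_sperner {1..s} F'))"
proof (intro conjI allI impI)
  have ns: "2 * s \<le> n" by fact
  have finP: "finite X" if "X \<subseteq> {1..n}" for X using that finite_subset by blast
  fix F :: "nat set set"
  assume FP: "F \<subseteq> Pow {1..n}"
  {
    assume H: "L_close_sperner {1..s} F"
    have achF: "ach F" unfolding ach_def
    proof (intro ballI impI)
      fix A B assume AB: "A \<in> F" "B \<in> F" "A \<subseteq> B"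
      show "A = B"
      proof (rule ccontr)
        assume "A \<noteq> B"
        then have "min (card (A - B)) (card (B - A)) \<in> {1..s}" using H AB unfolding L_close_sperner_def by blast
        moreover have "A - B = {}" using AB by auto
        ultimately show False by simp
      qed
    qed
    obtain F' where F': "F' \<subseteq> Pow {1..n}" "ach F'" "card F' = card F"
     "\<forall>X\<in>F'. s \<le> card X \<and> card X \<le> n - s \<and>
        (\<exists>A\<in>F. (card X = s \<and> A \<subseteq> X) \<or> (card X = n - s \<and> X \<subseteq> A) \<or> X = A)"
      using middle[OF ns FP achF] by blast
    have "L_close_sperner {1..s} F'" unfolding L_close_sperner_def
    proof (intro ballI impI)
      fix X Y assume X: "X \<in> F'" and Y: "Y \<in> F'" and XY: "X \<noteq> Y"
      have XP: "X \<subseteq> {1..n}" and YP: "Y \<subseteq> {1..n}" using X Y F'(1) by auto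
      have "\<not> X \<subseteq> Y" "\<not> Y \<subseteq> X" using F'(2) X Y XY unfolding ach_def by auto
      then have lo: "1 \<le> card (X - Y)" "1 \<le> card (Y - X)" using diff_pos finP[OF XP] finP[OF YP] by auto
      obtain A where A: "A \<in> F" "(card X = s \<and> A \<subseteq> X) \<or> (card X = n - s \<and> X \<subseteq> A) \<or> X = A"
        using F'(4) X by blast
      obtain B where B: "B \<in> F" "(card Y = s \<and> B \<subseteq> Y) \<or> (card Y = n - s \<and> Y \<subseteq> B) \<or> Y = B"
        using F'(4) Y by blast
      have d1: "card (X - Y) \<le> card X" using finP[OF XP] by (simp add: card_mono)
      have d2: "card (Y - X) \<le> card Y" using finP[OF YP] by (simp add: card_mono)
      have d3: "card (Y - X) \<le> n - card X" by (rule card_diff_le_compl[OF XP YP])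
      have d4: "card (X - Y) \<le> n - card Y" by (rule card_diff_le_compl[OF YP XP])
      have "min (card (X - Y)) (card (Y - X)) \<le> s"
      proof (cases "card X = s \<or> card X = n - s \<or> card Y = s \<or> card Y = n - s")
        case True
        then show ?thesis using d1 d2 d3 d4 ns by (auto simp: min_def)
      next
        case False
        then have "X = A" "Y = B" using A B by auto
        then show ?thesis using H A(1) B(1) XY unfolding L_close_sperner_def by fastforce
      qed
      then show "min (card (X - Y)) (card (Y - X)) \<in> {1..s}" using lo by simp
    qed
    then show "\<exists>F'. F' \<subseteq> Pow {1..n} \<and> card F' = card F \<and>
                  (\<forall>A\<in>F'. s \<le> card A \<and> card A \<le> n - s) \<and> L_close_sperner {1..s} F'"
      using F' by blast
  }
  {
    assume H: "L_differencing_sperner {1..s} F"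
    have achF: "ach F" unfolding ach_def
    proof (intro ballI impI)
      fix A B assume AB: "A \<in> F" "B \<in> F" "A \<subseteq> B"
      show "A = B"
      proof (rule ccontr)
        assume "A \<noteq> B"
        then have "card (A - B) \<in> {1..s}" using H AB unfolding L_differencing_sperner_def by blast
        moreover have "A - B = {}" using AB by auto
        ultimately show False by simp
      qed
    qed
    obtain F' where F': "F' \<subseteq> Pow {1..n}" "ach F'" "card F' = card F"
     "\<forall>X\<in>F'. s \<le> card X \<and> card X \<le> n - s \<and>
        (\<exists>A\<in>F. (card X = s \<and> A \<subseteq> X) \<or> (card X = n - s \<and> X \<subseteq> A) \<or> X = A)"
      using middle[OF ns FP achF] by blast
    have "L_differencing_sperner {1..s} F'" unfolding L_differencing_sperner_def
    proof (intro ballI impI)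
      fix X Y assume X: "X \<in> F'" and Y: "Y \<in> F'" and XY: "X \<noteq> Y"
      have XP: "X \<subseteq> {1..n}" and YP: "Y \<subseteq> {1..n}" using X Y F'(1) by auto
      have "\<not> X \<subseteq> Y" using F'(2) X Y XY unfolding ach_def by auto
      then have lo: "1 \<le> card (X - Y)" using diff_pos finP[OF XP] by auto
      obtain A where A: "A \<in> F" "(card X = s \<and> A \<subseteq> X) \<or> (card X = n - s \<and> X \<subseteq> A) \<or> X = A"
        using F'(4) X by blast
      obtain B where B: "B \<in> F" "(card Y = s \<and> B \<subseteq> Y) \<or> (card Y = n - s \<and> Y \<subseteq> B) \<or> Y = B"
        using F'(4) Y by blast
      have d1: "card (X - Y) \<le> card X" using finP[OF XP] by (simp add: card_mono)
      have d4: "card (X - Y) \<le> n - card Y" by (rule card_diff_le_compl[OF YP XP])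
      have "card (X - Y) \<le> s"
      proof (cases "card X = s \<or> card Y = n - s")
        case True
        then show ?thesis using d1 d4 ns by auto
      next
        case False
        then have XA: "X \<subseteq> A" and BY: "B \<subseteq> Y" using A B by auto
        have fA: "finite A" using A(1) FP finP by blast
        have sub: "X - Y \<subseteq> A - B" using XA BY by blast
        then have c: "card (X - Y) \<le> card (A - B)" using fA by (simp add: card_mono)
        show ?thesis
        proof (cases "A = B")
          case True
          then have "X - Y = {}" using XA BY by blast
          then have "card (X - Y) = 0" by (metis card.empty)
          then show ?thesis by simp
        next
          case False
          then have "card (A - B) \<in> {1..s}" using H A(1) B(1) unfolding L_differencing_sperner_def by blast
          then show ?thesis using c by simp
        qed
      qed
      then show "card (X - Y) \<in> {1..s}" using lo by simp
    qed
    then show "\<exists>F'. F' \<subseteq> Pow {1..n} \<and> card F' = card F \<and>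
                  (\<forall>A\<in>F'. s \<le> card A \<and> card A \<le> n - s) \<and> L_differencing_sperner {1..s} F'"
      using F' by blast
  }
qed

end
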